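(* Let $k \geq 10$ be an integer. Then the $\mathbb{Z}$-module $\widetilde{M}_{2k}^{\mathbb{Z}}$ has a $\mathbb{Z}$-basis such that every element $f = \sum_{n \geq 0} a_f(n) q^n$ of this basis satisfies, for all $n \geq 1$, $$|a_f(n)| \leq \left(\frac{k+6}{6}\right)^{\frac{k^2}{3}} \cdot 109 \cdot 2^{2k-1} n^{2k-1} (1+\log(n))^k.$$
   Context: Let $q = e^{2\pi i z}$, $E_2 = 1 - 24\sum_{n\geq1}\sigma_1(n)q^n$, $E_4 = 1 + 240\sum_{n \geq 1}\sigma_3(n)q^n$, $E_6 = 1 - 504\sum_{n\geq1}\sigma_5(n)q^n$, with $\sigma_\ell(n)=\sum_{d\mid n} d^\ell$. The space $\widetilde{M}_{2k}$ of quasimodular forms of weight $2k$ for $\mathrm{SL}_2(\mathbb{Z})$ is the $\mathbb{C}$-span of the $q$-series $E_2^aE_4^bE_6^c$ with $2a+4b+6c=2k$, and $\widetilde{M}_{2k}^{\mathbb{Z}} = \widetilde{M}_{2k} \cap \mathbb{Z}[[q]]$ (a free $\mathbb{Z}$-module whose rank is $\dim_{\mathbb{C}} \widetilde{M}_{2k}$). A $\mathbb{Z}$-basis is a basis of $\widetilde{M}_{2k}^{\mathbb{Z}}$ as a $\mathbb{Z}$-module. *)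

theory Defs
  imports "HOL-Analysis.Analysis" "HOL-Computational_Algebra.Formal_Power_Series"
begin

definition sigma :: "nat \<Rightarrow> nat \<Rightarrow> nat" where
  "sigma l n = (\<Sum>d \<in> {d. d dvd n}. d ^ l)"

text \<open>Eisenstein series as formal q-series (coefficient n = coefficient of q^n).\<close>
definition E2 :: "complex fps" where
  "E2 = Abs_fps (\<lambda>n. if n = 0 then 1 else - 24 * of_nat (sigma 1 n))"
definition E4 :: "complex fps" where
  "E4 = Abs_fps (\<lambda>n. if n = 0 then 1 else 240 * of_nat (sigma 3 n))"
definition E6 :: "complex fps" where
  "E6 = Abs_fps (\<lambda>n. if n = 0 then 1 else - 504 * of_nat (sigma 5 n))"

definition wt_triples :: "nat \<Rightarrow> (nat \<times> nat \<times> nat) set" where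
  "wt_triples k = {(a, b, c). 2*a + 4*b + 6*c = 2*k}"

text \<open>Quasimodular forms of weight 2k: the complex span of the E2^a E4^b E6^c.\<close>
definition QM :: "nat \<Rightarrow> complex fps set" where
  "QM k = {f. \<exists>coef :: nat \<times> nat \<times> nat \<Rightarrow> complex.
      f = (\<Sum>(a, b, c) \<in> wt_triples k. fps_const (coef (a, b, c)) * E2 ^ a * E4 ^ b * E6 ^ c)}"

definition QMZ :: "nat \<Rightarrow> complex fps set" where
  "QMZ k = {f \<in> QM k. \<forall>n. fps_nth f n \<in> \<int>}"

definition is_Z_basis :: "complex fps set \<Rightarrow> (nat \<Rightarrow> complex fps) \<Rightarrow> nat \<Rightarrow> bool" where
  "is_Z_basis S b r \<longleftrightarrow> (\<forall>i<r. b i \<in> S) \<and>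
     (\<forall>f \<in> S. \<exists>!c :: nat \<Rightarrow> int. (\<forall>i\<ge>r. c i = 0) \<and>
          f = (\<Sum>i<r. fps_const (of_int (c i)) * b i))"

end

theory Submission
  imports Defs
begin


definition LL :: "nat \<Rightarrow> real" where "LL n = 1 + ln (real n)"

lemma LL_ge1: "n \<ge> 1 \<Longrightarrow> LL n \<ge> 1" by (simp add: LL_def)
lemma LL_mono: "1 \<le> i \<Longrightarrow> i \<le> n \<Longrightarrow> LL i \<le> LL n" by (simp add: LL_def)

lemma harm_le_LL: "n \<ge> 1 \<Longrightarrow> harm n \<le> LL n"
  using euler_mascheroni_sequence_decreasing[of 1 n] by (simp add: LL_def harm_expand)

lemma divisors_fin: "n \<ge> 1 \<Longrightarrow> finite {d::nat. d dvd n}"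
  by (rule finite_subset[of _ "{..n}"]) (auto intro: dvd_imp_le)

lemma div_div_dvd: assumes "(d::nat) dvd n" "n \<ge> 1" shows "n div (n div d) = d"
proof -
  obtain m where m: "n = d * m" using assms(1) by blast
  with assms have "d > 0" "m > 0" by auto
  with m show ?thesis by simp
qed

lemma sigma1_le: assumes "n \<ge> 1" shows "real (sigma 1 n) \<le> real n * LL n"
proof -
  let ?S = "{d::nat. d dvd n}"
  have "real (sigma 1 n) = (\<Sum>d\<in>?S. real d)" by (simp add: sigma_def)
  also have "\<dots> = (\<Sum>d\<in>?S. real (n div d))"
  proof (rule sum.reindex_bij_witness[of _ "\<lambda>d. n div d" "\<lambda>d. n div d"])
    fix d assume "d \<in> ?S" then show "n div (n div d) = d" "n div d \<in> ?S"
      using assms div_div_dvd by auto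
  qed (use assms div_div_dvd in auto)
  also have "\<dots> = (\<Sum>d\<in>?S. real n / real d)"
    by (intro sum.cong) (auto simp: real_of_nat_div)
  also have "\<dots> \<le> (\<Sum>d\<in>{1..n}. real n / real d)"
    using assms by (intro sum_mono2) (auto intro: dvd_imp_le simp: Suc_le_eq)
  also have "\<dots> = real n * harm n" by (simp add: harm_def sum_distrib_left field_simps)
  also have "\<dots> \<le> real n * LL n" using harm_le_LL[OF assms] by (intro mult_left_mono) auto
  finally show ?thesis .
qed

lemma sigma_le: assumes "n \<ge> 1" "l \<ge> 1" shows "real (sigma l n) \<le> real n ^ (l - 1) * (real n * LL n)"
proof -
  let ?S = "{d::nat. d dvd n}"
  have "real (sigma l n) = (\<Sum>d\<in>?S. real d ^ l)" by (simp add: sigma_def)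
  also have "\<dots> \<le> (\<Sum>d\<in>?S. real n ^ (l - 1) * real d)"
  proof (intro sum_mono)
    fix d assume "d \<in> ?S"
    hence "d \<le> n" using assms by (auto intro: dvd_imp_le)
    have "real d ^ l = real d ^ (l - 1) * real d" using assms(2)
      by (metis Suc_diff_le diff_Suc_1 power_Suc2)
    also have "\<dots> \<le> real n ^ (l - 1) * real d" using \<open>d \<le> n\<close>
      by (intro mult_right_mono power_mono) auto
    finally show "real d ^ l \<le> real n ^ (l - 1) * real d" .
  qed
  also have "\<dots> = real n ^ (l - 1) * real (sigma 1 n)" by (simp add: sigma_def sum_distrib_left)
  also have "\<dots> \<le> real n ^ (l - 1) * (real n * LL n)" using sigma1_le[OF assms(1)]
    by (intro mult_left_mono) auto
  finally show ?thesis .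
qed

definition Q :: "complex fps \<Rightarrow> real \<Rightarrow> nat \<Rightarrow> nat \<Rightarrow> bool" where
  "Q f A w s \<longleftrightarrow> fps_nth f 0 = 1 \<and> 0 \<le> A \<and> (w = 0 \<longrightarrow> A = 0) \<and>
     (\<forall>n\<ge>1. norm (fps_nth f n) \<le> A * real n ^ (w - 1) * LL n ^ s)"

lemma Q_A0: assumes "Q f 0 w s" shows "f = 1"
proof (rule fps_ext)
  fix n show "fps_nth f n = fps_nth 1 n"
    using assms unfolding Q_def by (cases "n = 0") auto
qed

lemma sum_split_ends: assumes "(n::nat) \<ge> 1"
  shows "(\<Sum>i=0..n. h i) = h 0 + h n + (\<Sum>i\<in>{1..<n}. (h i :: 'a::comm_monoid_add))"
proof -
  have "{0..n} = insert 0 (insert n {1..<n})" using assms by auto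
  thus ?thesis using assms by (simp add: add.assoc)
qed

lemma Q_mult_main:
  assumes f: "Q f A w1 s1" and g: "Q g B w2 s2" and w: "w1 \<ge> 1" "w2 \<ge> 1" and n: "n \<ge> 1"
  shows "norm (fps_nth (f * g) n) \<le> (A + B + A * B) * real n ^ (w1 + w2 - 1) * LL n ^ (s1 + s2)"
proof -
  have A: "A \<ge> 0" and B: "B \<ge> 0" using f g by (auto simp: Q_def)
  have f0: "fps_nth f 0 = 1" and g0: "fps_nth g 0 = 1" using f g by (auto simp: Q_def)
  have fb: "\<And>i. 1 \<le> i \<Longrightarrow> i \<le> n \<Longrightarrow> norm (fps_nth f i) \<le> A * real n ^ (w1 - 1) * LL n ^ s1"
  proof -
    fix i assume i: "1 \<le> i" "i \<le> n"
    have "norm (fps_nth f i) \<le> A * real i ^ (w1 - 1) * LL i ^ s1" using f i by (auto simp: Q_def)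
    also have "\<dots> \<le> A * real n ^ (w1 - 1) * LL n ^ s1"
      using i A LL_ge1[of i] LL_mono[of i n]
      by (intro mult_mono power_mono mult_left_mono) auto
    finally show "norm (fps_nth f i) \<le> A * real n ^ (w1 - 1) * LL n ^ s1" .
  qed
  have gb: "\<And>i. 1 \<le> i \<Longrightarrow> i \<le> n \<Longrightarrow> norm (fps_nth g i) \<le> B * real n ^ (w2 - 1) * LL n ^ s2"
  proof -
    fix i assume i: "1 \<le> i" "i \<le> n"
    have "norm (fps_nth g i) \<le> B * real i ^ (w2 - 1) * LL i ^ s2" using g i by (auto simp: Q_def)
    also have "\<dots> \<le> B * real n ^ (w2 - 1) * LL n ^ s2"
      using i B LL_ge1[of i] LL_mono[of i n]
      by (intro mult_mono power_mono mult_left_mono) auto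
    finally show "norm (fps_nth g i) \<le> B * real n ^ (w2 - 1) * LL n ^ s2" .
  qed
  define P where "P = real n ^ (w1 + w2 - 1) * LL n ^ (s1 + s2)"
  have Ln: "LL n \<ge> 1" using LL_ge1 n by auto
  have rn: "real n \<ge> 1" using n by auto
  have e1: "real n ^ (w1 - 1) * LL n ^ s1 \<le> P" unfolding P_def
    by (intro mult_mono power_increasing) (use rn Ln w in auto)
  have e2: "real n ^ (w2 - 1) * LL n ^ s2 \<le> P" unfolding P_def
    by (intro mult_mono power_increasing) (use rn Ln w in auto)
  have e3: "real (n - 1) * ((real n ^ (w1 - 1) * LL n ^ s1) * (real n ^ (w2 - 1) * LL n ^ s2)) \<le> P"
  proof -
    have "real (n - 1) * ((real n ^ (w1 - 1) * LL n ^ s1) * (real n ^ (w2 - 1) * LL n ^ s2))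
        = real (n - 1) * real n ^ (w1 - 1 + (w2 - 1)) * LL n ^ (s1 + s2)"
      by (simp add: power_add)
    also have "\<dots> \<le> real n * real n ^ (w1 - 1 + (w2 - 1)) * LL n ^ (s1 + s2)"
      using n Ln by (intro mult_right_mono) auto
    also have "\<dots> = real n ^ Suc (w1 - 1 + (w2 - 1)) * LL n ^ (s1 + s2)" by simp
    also have "Suc (w1 - 1 + (w2 - 1)) = w1 + w2 - 1" using w by arith
    finally show ?thesis unfolding P_def .
  qed
  have "norm (fps_nth (f * g) n) = norm (fps_nth f 0 * fps_nth g n + fps_nth f n * fps_nth g 0 + (\<Sum>i\<in>{1..<n}. fps_nth f i * fps_nth g (n - i)))"
    unfolding fps_mult_nth using sum_split_ends[OF n, of "\<lambda>i. fps_nth f i * fps_nth g (n - i)"] by simp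
  also have "\<dots> \<le> norm (fps_nth g n) + norm (fps_nth f n) + (\<Sum>i\<in>{1..<n}. norm (fps_nth f i) * norm (fps_nth g (n - i)))"
    using f0 g0 by (intro order.trans[OF norm_triangle_ineq] add_mono order.trans[OF norm_sum] sum_mono)
      (auto simp: norm_mult intro: order.trans[OF norm_triangle_ineq])
  also have "\<dots> \<le> B * (real n ^ (w2 - 1) * LL n ^ s2) + A * (real n ^ (w1 - 1) * LL n ^ s1)
       + (\<Sum>i\<in>{1..<n}. (A * (real n ^ (w1 - 1) * LL n ^ s1)) * (B * (real n ^ (w2 - 1) * LL n ^ s2)))"
    using n fb gb A B Ln
    by (intro add_mono sum_mono mult_mono) (auto simp: mult.assoc)
  also have "\<dots> = B * (real n ^ (w2 - 1) * LL n ^ s2) + A * (real n ^ (w1 - 1) * LL n ^ s1)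
       + A * B * (real (n - 1) * ((real n ^ (w1 - 1) * LL n ^ s1) * (real n ^ (w2 - 1) * LL n ^ s2)))"
    by (simp add: algebra_simps)
  also have "\<dots> \<le> B * P + A * P + A * B * P"
    using e1 e2 e3 A B by (intro add_mono mult_left_mono) auto
  also have "\<dots> = (A + B + A * B) * real n ^ (w1 + w2 - 1) * LL n ^ (s1 + s2)"
    unfolding P_def by (simp add: algebra_simps)
  finally show ?thesis .
qed

lemma Q_mono_s: assumes "Q f A w s" "s \<le> s'" shows "Q f A w s'"
  using assms unfolding Q_def
  by (auto intro: order.trans intro!: mult_left_mono power_increasing LL_ge1
       simp: mult_nonneg_nonneg)

lemma Q_mult:
  assumes f: "Q f A w1 s1" and g: "Q g B w2 s2"
  shows "Q (f * g) (A + B + A * B) (w1 + w2) (s1 + s2)"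
proof (cases "w1 = 0 \<or> w2 = 0")
  case True
  then show ?thesis
  proof
    assume "w1 = 0"
    hence "A = 0" using f by (simp add: Q_def)
    hence "f = 1" using Q_A0 f by auto
    thus ?thesis using Q_mono_s[OF g, of "s1 + s2"] \<open>A = 0\<close> \<open>w1 = 0\<close> by simp
  next
    assume "w2 = 0"
    hence "B = 0" using g by (simp add: Q_def)
    hence "g = 1" using Q_A0 g by auto
    thus ?thesis using Q_mono_s[OF f, of "s1 + s2"] \<open>B = 0\<close> \<open>w2 = 0\<close> by simp
  qed
next
  case False
  have "fps_nth (f * g) 0 = 1" using f g by (simp add: Q_def)
  moreover have "0 \<le> A + B + A * B" using f g by (simp add: Q_def)
  ultimately show ?thesis using Q_mult_main[OF f g] False unfolding Q_def by auto
qed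

lemma Q_power: assumes "Q f A w s" shows "Q (f ^ m) ((1 + A) ^ m - 1) (m * w) (m * s)"
proof (induction m)
  case 0
  then show ?case by (simp add: Q_def)
next
  case (Suc m)
  have "Q (f * f ^ m) (A + ((1 + A) ^ m - 1) + A * ((1 + A) ^ m - 1)) (w + m * w) (s + m * s)"
    by (rule Q_mult[OF assms Suc])
  moreover have "A + ((1 + A) ^ m - 1) + A * ((1 + A) ^ m - 1) = (1 + A) ^ Suc m - 1"
    by (simp add: algebra_simps)
  ultimately show ?case by simp
qed




lemma Q_E2: "Q E2 24 2 1"
  unfolding Q_def E2_def using sigma1_le by (auto simp: norm_mult)

lemma Q_E4: "Q E4 240 4 1"
  unfolding Q_def E4_def
proof (intro conjI allI impI)
  fix n :: nat assume "n \<ge> 1"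
  have "norm (fps_nth (Abs_fps (\<lambda>n. if n = 0 then 1 else 240 * of_nat (sigma 3 n) :: complex)) n)
     = 240 * real (sigma 3 n)" using \<open>n \<ge> 1\<close> by (simp add: norm_mult)
  also have "\<dots> \<le> 240 * (real n ^ 2 * (real n * LL n))" using sigma_le[of n 3] \<open>n \<ge> 1\<close> by simp
  also have "\<dots> = 240 * real n ^ (4 - 1) * LL n ^ 1" by (simp add: power_numeral_reduce algebra_simps)
  finally show "norm (fps_nth (Abs_fps (\<lambda>n. if n = 0 then 1 else 240 * of_nat (sigma 3 n) :: complex)) n)
     \<le> 240 * real n ^ (4 - 1) * LL n ^ 1" .
qed auto

lemma Q_E6: "Q E6 504 6 1"
  unfolding Q_def E6_def
proof (intro conjI allI impI)
  fix n :: nat assume "n \<ge> 1"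
  have "norm (fps_nth (Abs_fps (\<lambda>n. if n = 0 then 1 else - 504 * of_nat (sigma 5 n) :: complex)) n)
     = 504 * real (sigma 5 n)" using \<open>n \<ge> 1\<close> by (simp add: norm_mult)
  also have "\<dots> \<le> 504 * (real n ^ 4 * (real n * LL n))" using sigma_le[of n 5] \<open>n \<ge> 1\<close> by simp
  also have "\<dots> = 504 * real n ^ (6 - 1) * LL n ^ 1" by (simp add: power_numeral_reduce algebra_simps)
  finally show "norm (fps_nth (Abs_fps (\<lambda>n. if n = 0 then 1 else - 504 * of_nat (sigma 5 n) :: complex)) n)
     \<le> 504 * real n ^ (6 - 1) * LL n ^ 1" .
qed auto

definition emono :: "nat \<times> nat \<times> nat \<Rightarrow> complex fps" where
  "emono t = (case t of (a, b, c) \<Rightarrow> E2 ^ a * E4 ^ b * E6 ^ c)"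

lemma Q_mono: "Q (E2 ^ a * E4 ^ b * E6 ^ c) (25 ^ a * 241 ^ b * 505 ^ c - 1) (2*a + 4*b + 6*c) (a + b + c)"
proof -
  have "Q (E2 ^ a * E4 ^ b) (((1 + 24) ^ a - 1) + ((1 + 240) ^ b - 1) + ((1 + 24) ^ a - 1) * ((1 + 240) ^ b - 1))
     (a * 2 + b * 4) (a * 1 + b * 1)"
    by (rule Q_mult[OF Q_power[OF Q_E2] Q_power[OF Q_E4]])
  hence "Q (E2 ^ a * E4 ^ b) (25 ^ a * 241 ^ b - 1) (a * 2 + b * 4) (a * 1 + b * 1)"
    by (simp add: algebra_simps)
  from Q_mult[OF this Q_power[OF Q_E6, of c]]
  show ?thesis by (simp add: algebra_simps)
qed

lemma mono_bound:
  assumes "2*a + 4*b + 6*c = 2*k" "n \<ge> 1"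
  shows "norm (fps_nth (E2 ^ a * E4 ^ b * E6 ^ c) n) \<le> 25 ^ k * real n ^ (2*k - 1) * LL n ^ k"
proof -
  have "norm (fps_nth (E2 ^ a * E4 ^ b * E6 ^ c) n) \<le> (25 ^ a * 241 ^ b * 505 ^ c - 1) * real n ^ (2*k - 1) * LL n ^ (a+b+c)"
    using Q_mono[of a b c] assms unfolding Q_def by auto
  also have "\<dots> \<le> 25 ^ k * real n ^ (2*k - 1) * LL n ^ k"
  proof (intro mult_mono power_increasing)
    have "(25::real) ^ a * 241 ^ b * 505 ^ c \<le> 25 ^ a * 625 ^ b * 15625 ^ c"
      by (intro mult_mono power_mono) auto
    also have "\<dots> = 25 ^ (a + 2 * b + 3 * c)" by (simp add: power_add power_mult)
    also have "a + 2 * b + 3 * c = k" using assms by simp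
    finally show "(25::real) ^ a * 241 ^ b * 505 ^ c - 1 \<le> 25 ^ k" by simp
    show "a + b + c \<le> k" using assms by simp
  qed (use assms LL_ge1[of n] in \<open>auto intro!: zero_le_power\<close>)
  finally show ?thesis .
qed




definition intfps :: "complex fps \<Rightarrow> bool" where
  "intfps f \<longleftrightarrow> (\<forall>n. fps_nth f n \<in> \<int>)"

definition toint :: "complex \<Rightarrow> int" where "toint z = \<lfloor>Re z\<rfloor>"

lemma toint: "z \<in> \<int> \<Longrightarrow> of_int (toint z) = z"
  by (auto simp: toint_def elim!: Ints_cases)

lemma intfps_mult: "intfps f \<Longrightarrow> intfps g \<Longrightarrow> intfps (f * g)"
  unfolding intfps_def fps_mult_nth by (auto intro!: Ints_sum Ints_mult)
lemma intfps_add: "intfps f \<Longrightarrow> intfps g \<Longrightarrow> intfps (f + g)"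
  unfolding intfps_def by (auto intro!: Ints_add)
lemma intfps_diff: "intfps f \<Longrightarrow> intfps g \<Longrightarrow> intfps (f - g)"
  unfolding intfps_def by (auto intro!: Ints_diff)
lemma intfps_one: "intfps 1" unfolding intfps_def by (auto simp: fps_one_nth)
lemma intfps_zero: "intfps 0" unfolding intfps_def by auto
lemma intfps_power: "intfps f \<Longrightarrow> intfps (f ^ m)"
  by (induction m) (auto intro: intfps_one intfps_mult)
lemma intfps_const: "z \<in> \<int> \<Longrightarrow> intfps f \<Longrightarrow> intfps (fps_const z * f)"
  unfolding intfps_def by (auto intro!: Ints_mult)
lemma intfps_sum: "(\<And>i. i \<in> A \<Longrightarrow> intfps (F i)) \<Longrightarrow> intfps (\<Sum>i\<in>A. F i)"
  unfolding intfps_def fps_sum_nth by (auto intro!: Ints_sum)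

lemma intfps_E2: "intfps E2" unfolding intfps_def E2_def by auto
lemma intfps_E4: "intfps E4" unfolding intfps_def E4_def by auto
lemma intfps_E6: "intfps E6" unfolding intfps_def E6_def by auto

lemma intfps_mono: "intfps (E2 ^ a * E4 ^ b * E6 ^ c)"
  by (intro intfps_mult intfps_power intfps_E2 intfps_E4 intfps_E6)

definition ifun :: "(complex fps \<Rightarrow> complex) \<Rightarrow> bool" where
  "ifun \<phi> \<longleftrightarrow> (\<exists>N c. \<forall>f. \<phi> f = (\<Sum>n<N. of_int (c n) * fps_nth f n))"

lemma ifun_add: "ifun \<phi> \<Longrightarrow> \<phi> (f + g) = \<phi> f + \<phi> g"
  unfolding ifun_def by (auto simp: sum.distrib algebra_simps)
lemma ifun_diff: "ifun \<phi> \<Longrightarrow> \<phi> (f - g) = \<phi> f - \<phi> g"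
  unfolding ifun_def by (auto simp: sum_subtractf algebra_simps)
lemma ifun_const: "ifun \<phi> \<Longrightarrow> \<phi> (fps_const a * f) = a * \<phi> f"
  unfolding ifun_def by (auto simp: sum_distrib_left algebra_simps)
lemma ifun_sum: "ifun \<phi> \<Longrightarrow> \<phi> (\<Sum>i\<in>A. F i) = (\<Sum>i\<in>A. \<phi> (F i))"
  unfolding ifun_def by (auto simp: fps_sum_nth sum_distrib_left intro: sum.swap)
lemma ifun_int: "ifun \<phi> \<Longrightarrow> intfps f \<Longrightarrow> \<phi> f \<in> \<int>"
  unfolding ifun_def intfps_def by (auto intro!: Ints_sum Ints_mult)

lemma ifun_ext:
  fixes \<phi> :: "complex fps \<Rightarrow> complex"
  assumes "\<forall>f. \<phi> f = (\<Sum>n<N. of_int (c n) * fps_nth f n)" "N \<le> M"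
  shows "\<forall>f. \<phi> f = (\<Sum>n<M. of_int (if n < N then c n else 0) * fps_nth f n)"
proof
  fix f :: "complex fps"
  have "(\<Sum>n<M. of_int (if n < N then c n else 0) * fps_nth f n)
      = (\<Sum>n<N. of_int (if n < N then c n else 0) * fps_nth f n)"
    using assms(2) by (intro sum.mono_neutral_right) auto
  also have "\<dots> = \<phi> f" using assms(1) by simp
  finally show "\<phi> f = (\<Sum>n<M. of_int (if n < N then c n else 0) * fps_nth f n)" ..
qed

lemma ifun_lin: assumes "ifun \<phi>" "ifun \<psi>"
  shows "ifun (\<lambda>f. of_int a * \<phi> f + of_int b * \<psi> f)"
proof -
  obtain N1 c1 where 1: "\<forall>f. \<phi> f = (\<Sum>n<N1. of_int (c1 n) * fps_nth f n)" using assms(1) ifun_def by auto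
  obtain N2 c2 where 2: "\<forall>f. \<psi> f = (\<Sum>n<N2. of_int (c2 n) * fps_nth f n)" using assms(2) ifun_def by auto
  let ?M = "max N1 N2"
  note e1 = ifun_ext[OF 1, of ?M] and e2 = ifun_ext[OF 2, of ?M]
  show ?thesis unfolding ifun_def
    apply (rule exI[of _ ?M])
    apply (rule exI[of _ "\<lambda>n. a * (if n < N1 then c1 n else 0) + b * (if n < N2 then c2 n else 0)"])
    using e1 e2 by (auto simp: sum_distrib_left sum.distrib algebra_simps)
qed

lemma ifun_zero: "ifun (\<lambda>f. 0)"
  unfolding ifun_def by (rule exI[of _ 0]) auto

lemma ifun_nth: "ifun (\<lambda>f. fps_nth f p)"
  unfolding ifun_def
  by (rule exI[of _ "Suc p"], rule exI[of _ "\<lambda>n. if n = p then 1 else 0"])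
     (auto simp: if_distrib sum.delta cong: if_cong)

lemma ifun_sumj: assumes "\<And>j. j \<in> A \<Longrightarrow> ifun (\<phi> j)" "finite A"
  shows "ifun (\<lambda>f. \<Sum>j\<in>A. of_int (c j) * \<phi> j f)"
  using assms(2,1)
proof (induction A rule: finite_induct)
  case empty then show ?case by (simp add: ifun_zero)
next
  case (insert x F)
  have "ifun (\<lambda>f. of_int (c x) * \<phi> x f + of_int 1 * (\<Sum>j\<in>F. of_int (c j) * \<phi> j f))"
    using insert by (intro ifun_lin) auto
  then show ?case using insert by simp
qed




definition spanu :: "nat \<Rightarrow> (nat \<Rightarrow> complex fps) \<Rightarrow> complex fps \<Rightarrow> bool" where
  "spanu d u f \<longleftrightarrow> (\<exists>x. f = (\<Sum>i<d. fps_const (x i) * u i))"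

definition dualsys :: "nat \<Rightarrow> (nat \<Rightarrow> complex fps) \<Rightarrow> (nat \<Rightarrow> complex fps \<Rightarrow> complex) \<Rightarrow> int \<Rightarrow> bool" where
  "dualsys d u \<phi> D \<longleftrightarrow> (\<forall>j<d. ifun (\<phi> j)) \<and> D > 0 \<and>
     (\<forall>i<d. \<forall>j<d. \<phi> j (u i) = (if i = j then of_int D else 0))"

lemma sum_delta_mult: "j < (d::nat) \<Longrightarrow> (\<Sum>i<d. (a i :: complex) * (if i = j then c else 0)) = a j * c"
proof -
  assume "j < d"
  have "(\<Sum>i<d. a i * (if i = j then c else 0)) = (\<Sum>i<d. if i = j then a j * c else 0)"
    by (intro sum.cong) auto
  also have "\<dots> = a j * c" using \<open>j < d\<close> by (subst sum.delta) auto
  finally show ?thesis .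
qed

lemma phi_span:
  assumes "dualsys d u \<phi> D" "j < d"
  shows "\<phi> j (\<Sum>i<d. fps_const (x i) * u i) = x j * of_int D"
proof -
  have if_: "ifun (\<phi> j)" using assms unfolding dualsys_def by auto
  have "\<phi> j (\<Sum>i<d. fps_const (x i) * u i) = (\<Sum>i<d. x i * \<phi> j (u i))"
    by (simp add: ifun_sum[OF if_] ifun_const[OF if_])
  also have "\<dots> = (\<Sum>i<d. x i * (if i = j then of_int D else 0))"
    using assms unfolding dualsys_def by (intro sum.cong) auto
  also have "\<dots> = x j * of_int D" using sum_delta_mult[OF assms(2)] .
  finally show ?thesis .
qed

lemma incr:
  assumes "finite G" "\<forall>g\<in>G. intfps g"
  shows "\<exists>d u \<phi> D. d \<le> card G \<and> (\<forall>i<d. u i \<in> G) \<and> dualsys d u \<phi> D \<and> (\<forall>g\<in>G. spanu d u g)"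
  using assms
proof (induction G rule: finite_induct)
  case empty
  show ?case by (rule exI[of _ 0], rule exI[of _ "\<lambda>_. 0"], rule exI[of _ "\<lambda>_ _. 0"], rule exI[of _ 1])
    (auto simp: dualsys_def)
next
  case (insert m G)
  then obtain d u \<phi> D where IH: "d \<le> card G" "\<forall>i<d. u i \<in> G" "dualsys d u \<phi> D" "\<forall>g\<in>G. spanu d u g"
    by auto
  have ifs: "\<And>j. j < d \<Longrightarrow> ifun (\<phi> j)" and Dpos: "D > 0"
    and dual: "\<And>i j. i < d \<Longrightarrow> j < d \<Longrightarrow> \<phi> j (u i) = (if i = j then of_int D else 0)"
    using IH(3) unfolding dualsys_def by auto
  have uint: "\<And>i. i < d \<Longrightarrow> intfps (u i)" using IH(2) insert.prems by auto
  have mint: "intfps m" using insert.prems by auto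
  show ?case
  proof (cases "spanu d u m")
    case True
    show ?thesis
      by (rule exI[of _ d], rule exI[of _ u], rule exI[of _ \<phi>], rule exI[of _ D])
        (use IH True insert.hyps in auto)
  next
    case False
    define g where "g = fps_const (of_int D) * m - (\<Sum>j<d. fps_const (\<phi> j m) * u j)"
    have phiint: "\<And>j. j < d \<Longrightarrow> \<phi> j m \<in> \<int>" using ifun_int[OF ifs mint] by auto
    have gint: "intfps g" unfolding g_def
      by (intro intfps_diff intfps_const intfps_sum mint uint phiint) auto
    have "g \<noteq> 0"
    proof
      assume "g = 0"
      hence "fps_const (of_int D) * m = (\<Sum>j<d. fps_const (\<phi> j m) * u j)" unfolding g_def by simp
      have "m = (\<Sum>j<d. fps_const (\<phi> j m / of_int D) * u j)"
      proof (rule fps_ext)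
        fix n
        have "of_int D * fps_nth m n = (\<Sum>j<d. \<phi> j m * fps_nth (u j) n)"
          using arg_cong[OF \<open>fps_const (of_int D) * m = _\<close>, of "\<lambda>f. fps_nth f n"]
          by (simp add: fps_sum_nth)
        hence "fps_nth m n = (\<Sum>j<d. \<phi> j m * fps_nth (u j) n) / of_int D"
          using Dpos by (simp add: field_simps)
        thus "fps_nth m n = fps_nth (\<Sum>j<d. fps_const (\<phi> j m / of_int D) * u j) n"
          by (simp add: fps_sum_nth sum_divide_distrib)
      qed
      hence "spanu d u m" unfolding spanu_def by (rule exI[of _ "\<lambda>j. \<phi> j m / of_int D"])
      with False show False by simp
    qed
    then obtain p where p: "fps_nth g p \<noteq> 0" by (metis fps_ext fps_zero_nth)
    define e where "e = toint (fps_nth g p)"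
    have ge: "fps_nth g p = of_int e" unfolding e_def using gint toint unfolding intfps_def by auto
    with p have e0: "e \<noteq> 0" by auto
    define cu where "cu j = toint (fps_nth (u j) p)" for j
    have cu: "\<And>j. j < d \<Longrightarrow> fps_nth (u j) p = of_int (cu j)"
      unfolding cu_def using uint toint unfolding intfps_def by auto
    define \<psi> where "\<psi> f = of_int (sgn e) * (of_int D * fps_nth f p - (\<Sum>j<d. fps_nth (u j) p * \<phi> j f))" for f
    have \<psi>_alt: "\<psi> = (\<lambda>f. of_int (sgn e * D) * fps_nth f p + of_int (- sgn e) * (\<Sum>j<d. of_int (cu j) * \<phi> j f))"
      unfolding \<psi>_def by (auto simp: cu algebra_simps intro!: ext sum.cong)
    have if\<psi>: "ifun \<psi>" unfolding \<psi>_alt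
      by (intro ifun_lin ifun_nth ifun_sumj ifs) auto
    have \<psi>u: "\<And>i. i < d \<Longrightarrow> \<psi> (u i) = 0"
    proof -
      fix i assume i: "i < d"
      have "(\<Sum>j<d. fps_nth (u j) p * \<phi> j (u i)) = (\<Sum>j<d. fps_nth (u j) p * (if j = i then of_int D else 0))"
        using dual i by (intro sum.cong) auto
      also have "\<dots> = fps_nth (u i) p * of_int D" using sum_delta_mult[OF i] by simp
      finally show "\<psi> (u i) = 0" unfolding \<psi>_def by simp
    qed
    define e' where "e' = \<bar>e\<bar>"
    have \<psi>m: "\<psi> m = of_int e'"
    proof -
      have "fps_nth g p = of_int D * fps_nth m p - (\<Sum>j<d. \<phi> j m * fps_nth (u j) p)"
        unfolding g_def by (simp add: fps_sum_nth)
      hence "\<psi> m = of_int (sgn e) * fps_nth g p" unfolding \<psi>_def by (simp add: mult.commute)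
      also have "\<dots> = of_int (sgn e * e)" using ge by simp
      also have "sgn e * e = \<bar>e\<bar>" by (simp add: abs_sgn mult.commute)
      finally show ?thesis unfolding e'_def .
    qed
    have e'pos: "e' > 0" using e0 unfolding e'_def by auto
    define u' where "u' = u(d := m)"
    define \<phi>' where "\<phi>' j = (if j < d then (\<lambda>f. of_int e' * \<phi> j f - \<phi> j m * \<psi> f) else (\<lambda>f. of_int D * \<psi> f))" for j
    define D' where "D' = D * e'"
    have "dualsys (Suc d) u' \<phi>' D'"
      unfolding dualsys_def
    proof (intro conjI allI impI)
      fix j assume "j < Suc d"
      show "ifun (\<phi>' j)"
      proof (cases "j < d")
        case True
        have "ifun (\<lambda>f. of_int e' * \<phi> j f + of_int (- toint (\<phi> j m)) * \<psi> f)"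
          by (intro ifun_lin ifs True if\<psi>)
        moreover have "of_int (- toint (\<phi> j m)) = - \<phi> j m" using toint[OF phiint[OF True]] by simp
        ultimately show ?thesis unfolding \<phi>'_def using True by simp
      next
        case False
        have "ifun (\<lambda>f. of_int D * \<psi> f + of_int 0 * \<psi> f)" by (intro ifun_lin if\<psi>)
        then show ?thesis unfolding \<phi>'_def using False by simp
      qed
    next
      show "0 < D'" unfolding D'_def using Dpos e'pos by simp
    next
      fix i j assume i: "i < Suc d" and j: "j < Suc d"
      show "\<phi>' j (u' i) = (if i = j then of_int D' else 0)"
      proof (cases "i < d")
        case True
        then show ?thesis using j dual[OF True] \<psi>u[OF True]
          by (auto simp: \<phi>'_def u'_def D'_def)
      next
        case False
        hence "i = d" using i by simp
        then show ?thesis using j \<psi>m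
          by (auto simp: \<phi>'_def u'_def D'_def)
      qed
    qed
    moreover have "Suc d \<le> card (insert m G)" using IH(1) insert.hyps by simp
    moreover have "\<forall>i<Suc d. u' i \<in> insert m G" using IH(2) by (auto simp: u'_def less_Suc_eq)
    moreover have "\<forall>g\<in>insert m G. spanu (Suc d) u' g"
    proof
      fix h assume "h \<in> insert m G"
      then show "spanu (Suc d) u' h"
      proof
        assume "h = m"
        have "h = (\<Sum>i<Suc d. fps_const (if i = d then 1 else 0) * u' i)"
          using \<open>h = m\<close> by (simp add: u'_def)
        then show ?thesis unfolding spanu_def by (rule exI[of _ "\<lambda>i. if i = d then 1 else 0"])
      next
        assume "h \<in> G"
        then obtain x where x: "h = (\<Sum>i<d. fps_const (x i) * u i)" using IH(4) unfolding spanu_def by auto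
        have "h = (\<Sum>i<Suc d. fps_const ((x(d := 0)) i) * u' i)"
          unfolding x by (simp add: u'_def)
        then show ?thesis unfolding spanu_def by (rule exI[of _ "x(d := 0)"])
      qed
    qed
    ultimately show ?thesis by blast
  qed
qed




locale lat =
  fixes d :: nat and u :: "nat \<Rightarrow> complex fps" and \<phi> :: "nat \<Rightarrow> complex fps \<Rightarrow> complex" and D :: int
  assumes uint: "\<And>i. i < d \<Longrightarrow> intfps (u i)"
    and ds: "dualsys d u \<phi> D"
begin

lemma Dpos: "D > 0" using ds by (simp add: dualsys_def)

definition comb :: "(nat \<Rightarrow> int) \<Rightarrow> complex fps" where
  "comb y = (\<Sum>i<d. fps_const (of_int (y i) / of_int D) * u i)"

definition supp :: "(nat \<Rightarrow> int) \<Rightarrow> bool" where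
  "supp y \<longleftrightarrow> (\<forall>i\<ge>d. y i = 0)"

definition Gam :: "(nat \<Rightarrow> int) set" where
  "Gam = {y. supp y \<and> intfps (comb y)}"

definition GG :: "nat \<Rightarrow> (nat \<Rightarrow> int) set" where
  "GG j = {y \<in> Gam. \<forall>i<j. y i = 0}"

lemma comb_add: "comb (\<lambda>i. y i + z i) = comb y + comb z"
  unfolding comb_def by (simp add: sum.distrib add_divide_distrib distrib_right fps_const_add[symmetric] del: fps_const_add)

lemma comb_diff: "comb (\<lambda>i. y i - z i) = comb y - comb z"
  unfolding comb_def by (simp add: sum_subtractf diff_divide_distrib left_diff_distrib fps_const_sub[symmetric] del: fps_const_sub)

lemma comb_smult: "comb (\<lambda>i. a * y i) = fps_const (of_int a) * comb y"
  unfolding comb_def sum_distrib_left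
  by (intro sum.cong refl) (simp add: mult.assoc[symmetric] times_divide_eq_right)

lemma comb_zero: "comb (\<lambda>i. 0) = 0"
  unfolding comb_def by simp

lemma comb_sum: "comb (\<lambda>i. \<Sum>l\<in>A. c l * w l i) = (\<Sum>l\<in>A. fps_const (of_int (c l)) * comb (w l))"
proof (induction A rule: infinite_finite_induct)
  case (infinite A) then show ?case by (simp add: comb_zero)
next
  case empty then show ?case by (simp add: comb_zero)
next
  case (insert x F)
  have "comb (\<lambda>i. \<Sum>l\<in>insert x F. c l * w l i) = comb (\<lambda>i. c x * w x i + (\<Sum>l\<in>F. c l * w l i))"
    using insert by simp
  also have "\<dots> = fps_const (of_int (c x)) * comb (w x) + comb (\<lambda>i. \<Sum>l\<in>F. c l * w l i)"
    by (simp add: comb_add comb_smult)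
  finally show ?case using insert by simp
qed

lemma phi_comb: "j < d \<Longrightarrow> \<phi> j (comb y) = of_int (y j)"
  unfolding comb_def using phi_span[OF ds] Dpos by simp

lemma comb_inj: assumes "supp y" "supp z" "comb y = comb z" shows "y = z"
proof
  fix i show "y i = z i"
  proof (cases "i < d")
    case True
    then show ?thesis using phi_comb[of i y] phi_comb[of i z] assms(3) by simp
  next
    case False then show ?thesis using assms(1,2) by (simp add: supp_def)
  qed
qed

lemma Gam_add: "y \<in> Gam \<Longrightarrow> z \<in> Gam \<Longrightarrow> (\<lambda>i. y i + z i) \<in> Gam"
  unfolding Gam_def supp_def by (auto simp: comb_add intro: intfps_add)
lemma Gam_diff: "y \<in> Gam \<Longrightarrow> z \<in> Gam \<Longrightarrow> (\<lambda>i. y i - z i) \<in> Gam"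
  unfolding Gam_def supp_def by (auto simp: comb_diff intro: intfps_diff)
lemma Gam_smult: "y \<in> Gam \<Longrightarrow> (\<lambda>i. a * y i) \<in> Gam"
  unfolding Gam_def supp_def by (auto simp: comb_smult intro: intfps_const)
lemma Gam_zero: "(\<lambda>i. 0) \<in> Gam"
  unfolding Gam_def supp_def by (auto simp: comb_zero intfps_zero)

lemma GG_add: "y \<in> GG j \<Longrightarrow> z \<in> GG j \<Longrightarrow> (\<lambda>i. y i + z i) \<in> GG j"
  unfolding GG_def by (auto intro: Gam_add)
lemma GG_diff: "y \<in> GG j \<Longrightarrow> z \<in> GG j \<Longrightarrow> (\<lambda>i. y i - z i) \<in> GG j"
  unfolding GG_def by (auto intro: Gam_diff)
lemma GG_smult: "y \<in> GG j \<Longrightarrow> (\<lambda>i. a * y i) \<in> GG j"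
  unfolding GG_def by (auto intro: Gam_smult)
lemma GG_zero: "(\<lambda>i. 0) \<in> GG j"
  unfolding GG_def by (auto intro: Gam_zero)
lemma GG_mono: "y \<in> GG (Suc j) \<Longrightarrow> y \<in> GG j"
  unfolding GG_def by auto

lemma De_GG: assumes "j < d" shows "(\<lambda>i. if i = j then D else 0) \<in> GG j"
proof -
  have "comb (\<lambda>i. if i = j then D else 0) = (\<Sum>i<d. if i = j then u j else 0)"
    unfolding comb_def using Dpos by (intro sum.cong) auto
  also have "\<dots> = u j" using assms by (subst sum.delta) auto
  finally show ?thesis unfolding GG_def Gam_def supp_def using uint[OF assms] assms by auto
qed

definition h :: "nat \<Rightarrow> nat" where
  "h j = (LEAST p. p > 0 \<and> (\<exists>y\<in>GG j. y j = int p))"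

lemma h_props: assumes "j < d" shows "h j > 0" "\<exists>y\<in>GG j. y j = int (h j)" "int (h j) \<le> D"
proof -
  have ex: "nat D > 0 \<and> (\<exists>y\<in>GG j. y j = int (nat D))"
    using De_GG[OF assms] Dpos by (intro conjI bexI[of _ "\<lambda>i. if i = j then D else 0"]) auto
  have "h j > 0 \<and> (\<exists>y\<in>GG j. y j = int (h j))" unfolding h_def by (rule LeastI[where P="\<lambda>p. p > 0 \<and> (\<exists>y\<in>GG j. y j = int p)", OF ex])
  thus "h j > 0" "\<exists>y\<in>GG j. y j = int (h j)" by auto
  have "h j \<le> nat D" unfolding h_def by (rule Least_le[where P="\<lambda>p. p > 0 \<and> (\<exists>y\<in>GG j. y j = int p)", OF ex])
  thus "int (h j) \<le> D" using Dpos by linarith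
qed

lemma h_dvd: assumes "j < d" "y \<in> GG j" shows "int (h j) dvd y j"
proof (rule ccontr)
  assume nd: "\<not> int (h j) dvd y j"
  obtain v where v: "v \<in> GG j" "v j = int (h j)" using h_props(2)[OF assms(1)] by auto
  define y' where "y' = (\<lambda>i. y i - (y j div int (h j)) * v i)"
  have y': "y' \<in> GG j" unfolding y'_def by (intro GG_diff GG_smult assms v)
  have y'm: "y' j = y j mod int (h j)" unfolding y'_def using v(2) by (simp add: minus_div_mult_eq_mod[symmetric] mult.commute)
  have hp: "int (h j) > 0" using h_props(1)[OF assms(1)] by simp
  have nz: "y j mod int (h j) \<noteq> 0" using nd by (simp add: dvd_eq_mod_eq_0)
  have "0 \<le> y j mod int (h j)" "y j mod int (h j) < int (h j)" using hp by simp_all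
  hence y'j: "0 < y' j" "y' j < int (h j)" using nz y'm by linarith+
  have P: "nat (y' j) > 0 \<and> (\<exists>y\<in>GG j. y j = int (nat (y' j)))"
    using y'j y' by (intro conjI bexI[of _ y']) auto
  have "h j \<le> nat (y' j)" unfolding h_def
    by (rule Least_le[where P="\<lambda>p. p > 0 \<and> (\<exists>y\<in>GG j. y j = int p)", OF P])
  thus False using y'j by linarith
qed

lemma reduce:
  assumes "j \<le> d"
  shows "\<forall>x\<in>Gam. \<exists>z\<in>GG j. \<forall>k. j \<le> k \<longrightarrow> k < d \<longrightarrow> 0 \<le> x k - z k \<and> x k - z k < int (h k)"
  using assms
proof (induction j rule: inc_induct)
  case base
  show ?case
  proof
    fix x assume "x \<in> Gam"
    show "\<exists>z\<in>GG d. \<forall>k. d \<le> k \<longrightarrow> k < d \<longrightarrow> 0 \<le> x k - z k \<and> x k - z k < int (h k)"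
      using GG_zero by force
  qed
next
  case (step n)
  show ?case
  proof
    fix x assume x: "x \<in> Gam"
    obtain v where v: "v \<in> GG n" "v n = int (h n)" using h_props(2)[OF step(2)] by auto
    define c where "c = x n div int (h n)"
    define x' where "x' = (\<lambda>i. x i - c * v i)"
    have vG: "v \<in> Gam" using v(1) unfolding GG_def by blast
    have x': "x' \<in> Gam" unfolding x'_def by (rule Gam_diff[OF x Gam_smult[OF vG]])
    obtain z' where z': "z' \<in> GG (Suc n)"
      "\<forall>k. Suc n \<le> k \<longrightarrow> k < d \<longrightarrow> 0 \<le> x' k - z' k \<and> x' k - z' k < int (h k)"
      using bspec[OF step(3) x'] by (elim bexE) (rule that)
    define z where "z = (\<lambda>i. c * v i + z' i)"
    have zG: "z \<in> GG n" unfolding z_def by (rule GG_add[OF GG_smult[OF v(1)] GG_mono[OF z'(1)]])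
    have "\<forall>k. n \<le> k \<longrightarrow> k < d \<longrightarrow> 0 \<le> x k - z k \<and> x k - z k < int (h k)"
    proof (intro allI impI)
      fix k assume k: "n \<le> k" "k < d"
      have xz: "x k - z k = x' k - z' k" unfolding z_def x'_def by simp
      show "0 \<le> x k - z k \<and> x k - z k < int (h k)"
      proof (cases "k = n")
        case True
        have "z' n = 0" using z'(1) unfolding GG_def by auto
        hence "x k - z k = x n - c * int (h n)" unfolding True using v(2) by (simp add: z_def)
        also have "\<dots> = x n mod int (h n)" unfolding c_def by (metis minus_div_mult_eq_mod mult.commute)
        finally have "x k - z k = x n mod int (h n)" .
        moreover have "int (h n) > 0" using h_props(1)[OF step(2)] by simp
        ultimately show ?thesis using True by simp
      next
        case False
        hence "Suc n \<le> k" using k by simp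
        then show ?thesis using z'(2) k(2) xz by simp
      qed
    qed
    then show "\<exists>z\<in>GG n. \<forall>k. n \<le> k \<longrightarrow> k < d \<longrightarrow> 0 \<le> x k - z k \<and> x k - z k < int (h k)"
      using zG by blast
  qed
qed

lemma w_ex: assumes "j < d"
  shows "\<exists>w. w \<in> GG j \<and> w j = int (h j) \<and> (\<forall>k. j < k \<longrightarrow> k < d \<longrightarrow> 0 \<le> w k \<and> w k < int (h k))"
proof -
  obtain v where v: "v \<in> GG j" "v j = int (h j)" using h_props(2)[OF assms] by auto
  have "v \<in> Gam" using v unfolding GG_def by auto
  then obtain z where z: "z \<in> GG (Suc j)" "\<forall>k. Suc j \<le> k \<longrightarrow> k < d \<longrightarrow> 0 \<le> v k - z k \<and> v k - z k < int (h k)"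
    using reduce[of "Suc j"] assms by auto
  have "(\<lambda>i. v i - z i) \<in> GG j" by (rule GG_diff[OF v(1) GG_mono[OF z(1)]])
  moreover have "z j = 0" using z(1) unfolding GG_def by auto
  ultimately show ?thesis using v z by (intro exI[of _ "\<lambda>i. v i - z i"]) auto
qed

definition w :: "nat \<Rightarrow> nat \<Rightarrow> int" where
  "w j = (SOME w. w \<in> GG j \<and> w j = int (h j) \<and> (\<forall>k. j < k \<longrightarrow> k < d \<longrightarrow> 0 \<le> w k \<and> w k < int (h k)))"

lemma w_props: assumes "j < d"
  shows "w j \<in> GG j" "w j j = int (h j)" "\<And>k. j < k \<Longrightarrow> k < d \<Longrightarrow> 0 \<le> w j k \<and> w j k < int (h k)"
  using someI_ex[OF w_ex[OF assms]] unfolding w_def[symmetric] by auto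

lemma w_range: assumes "j < d" shows "0 \<le> w j k" "w j k \<le> D"
proof -
  have G: "w j \<in> GG j" by (rule w_props(1)[OF assms])
  have "0 \<le> w j k \<and> w j k \<le> D"
  proof (cases "k < j")
    case True then show ?thesis using G Dpos unfolding GG_def by auto
  next
    case False
    show ?thesis
    proof (cases "k = j")
      case True then show ?thesis using w_props(2)[OF assms] h_props(3)[OF assms] by simp
    next
      case False
      show ?thesis
      proof (cases "k < d")
        case True
        then show ?thesis using w_props(3)[OF assms, of k] h_props(3)[of k] \<open>\<not> k < j\<close> False by auto
      next
        case False
        then show ?thesis using G Dpos unfolding GG_def Gam_def supp_def by auto
      qed
    qed
  qed
  thus "0 \<le> w j k" "w j k \<le> D" by auto
qed

lemma w_supp: "j < d \<Longrightarrow> supp (w j)"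
  using w_props(1) unfolding GG_def Gam_def by auto

lemma spanning:
  assumes "j \<le> d"
  shows "\<forall>y\<in>GG j. \<exists>c. (\<forall>i. (i < j \<or> d \<le> i) \<longrightarrow> c i = 0) \<and> y = (\<lambda>i. \<Sum>l<d. c l * w l i)"
  using assms
proof (induction j rule: inc_induct)
  case base
  show ?case
  proof
    fix y assume "y \<in> GG d"
    hence "y = (\<lambda>i. 0)" unfolding GG_def Gam_def supp_def by (auto simp: not_less[symmetric])
    thus "\<exists>c. (\<forall>i. (i < d \<or> d \<le> i) \<longrightarrow> c i = 0) \<and> y = (\<lambda>i. \<Sum>l<d. c l * w l i)"
      by (intro exI[of _ "\<lambda>_. 0"]) auto
  qed
next
  case (step n)
  show ?case
  proof
    fix y assume y: "y \<in> GG n"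
    define a where "a = y n div int (h n)"
    have ya: "y n = a * int (h n)" unfolding a_def using h_dvd[OF step(2) y] by simp
    define y' where "y' = (\<lambda>i. y i - a * w n i)"
    have "y' \<in> GG n" unfolding y'_def by (intro GG_diff GG_smult y w_props(1) step(2))
    moreover have "y' n = 0" unfolding y'_def using ya w_props(2)[OF step(2)] by simp
    ultimately have "y' \<in> GG (Suc n)" unfolding GG_def by (auto simp: less_Suc_eq)
    then obtain c' where c': "\<forall>i. (i < Suc n \<or> d \<le> i) \<longrightarrow> c' i = 0" "y' = (\<lambda>i. \<Sum>l<d. c' l * w l i)"
      using step(3) by blast
    define c where "c = c'(n := a)"
    have "y = (\<lambda>i. \<Sum>l<d. c l * w l i)"
    proof
      fix i
      have "(\<Sum>l<d. c l * w l i) = (\<Sum>l<d. c' l * w l i + (if l = n then a * w n i else 0))"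
        unfolding c_def using c'(1) by (intro sum.cong) auto
      also have "\<dots> = (\<Sum>l<d. c' l * w l i) + a * w n i"
        using step(2) by (simp add: sum.distrib)
      also have "\<dots> = y' i + a * w n i" using c'(2) by simp
      also have "\<dots> = y i" unfolding y'_def by simp
      finally show "y i = (\<Sum>l<d. c l * w l i)" ..
    qed
    moreover have "\<forall>i. (i < n \<or> d \<le> i) \<longrightarrow> c i = 0" using c'(1) step(2) unfolding c_def by auto
    ultimately show "\<exists>c. (\<forall>i. (i < n \<or> d \<le> i) \<longrightarrow> c i = 0) \<and> y = (\<lambda>i. \<Sum>l<d. c l * w l i)"
      by blast
  qed
qed

lemma indep:
  assumes "\<forall>l. d \<le> l \<longrightarrow> c l = 0" "(\<lambda>i. \<Sum>l<d. c l * w l i) = (\<lambda>i. 0)"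
  shows "c l = 0"
proof (cases "l < d")
  case False then show ?thesis using assms(1) by auto
next
  case True
  then show ?thesis
  proof (induction l rule: less_induct)
    case (less l)
    have "(\<Sum>m<d. c m * w m l) = (\<Sum>m<d. if m = l then c l * int (h l) else 0)"
    proof (intro sum.cong refl)
      fix m assume m: "m \<in> {..<d}"
      show "c m * w m l = (if m = l then c l * int (h l) else 0)"
      proof (cases "m < l")
        case True then show ?thesis using less(1)[of m] less(2) by auto
      next
        case False
        show ?thesis
        proof (cases "m = l")
          case True then show ?thesis using w_props(2) less(2) by simp
        next
          case False
          hence "l < m" using \<open>\<not> m < l\<close> by simp
          hence "w m l = 0" using w_props(1)[of m] m unfolding GG_def by auto
          then show ?thesis using False by simp
        qed
      qed
    qed
    also have "\<dots> = c l * int (h l)" using less(2) by (subst sum.delta) auto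
    finally have "c l * int (h l) = 0" using fun_cong[OF assms(2), of l] by simp
    then show ?case using h_props(1)[OF less(2)] by simp
  qed
qed

end




lemma cube_le_4pow: "(k::nat) \<ge> 10 \<Longrightarrow> (k + 1) ^ 3 \<le> 4 ^ k"
proof (induction k rule: dec_induct)
  case base then show ?case by simp
next
  case (step m)
  have "m * m \<ge> 100" using step(1) mult_le_mono[OF step(1) step(1)] by simp
  hence "(Suc m + 1) ^ 3 \<le> 4 * (m + 1) ^ 3"
    by (simp add: power3_eq_cube algebra_simps)
  also have "\<dots> \<le> 4 * 4 ^ m" using step(3) by simp
  finally show ?case by simp
qed

lemma x25: "(25::real) \<le> (8/3) powr (10/3)"
  proof (rule ccontr)
    assume "\<not> ?thesis"
    hence lt: "(8/3) powr (10/3) < (25::real)" by simp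
    have "((8/3::real) powr (10/3)) ^ 3 = ((8/3::real) powr (10/3)) powr (real 3)"
      by (rule powr_realpow[symmetric]) simp
    also have "\<dots> = (8/3) powr (10/3 * real 3)" by (rule powr_powr)
    also have "10/3 * real 3 = real (10::nat)" by simp
    also have "(8/3::real) powr real (10::nat) = (8/3) ^ 10" by (rule powr_realpow) simp
    finally have e: "((8/3::real) powr (10/3)) ^ 3 = (8/3) ^ 10" .
    have "((8/3::real) powr (10/3)) ^ 3 < 25 ^ 3" using lt by (intro power_strict_mono) auto
    moreover have "(15625::real) \<le> (8/3) ^ 10" by (simp add: power_divide)
    ultimately show False using e by simp
  qed

lemma key_ineq: assumes "(k::nat) \<ge> 10"
  shows "real ((k + 1) ^ 3) * 25 ^ k \<le> ((real k + 6) / 6) powr (real k ^ 2 / 3) * 109 * 2 ^ (2*k - 1)"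
proof -
  have "(25::real) ^ k \<le> ((8/3) powr (10/3)) ^ k" using x25 by (intro power_mono) auto
  also have "\<dots> = ((8/3) powr (10/3)) powr (real k)" by (rule powr_realpow[symmetric]) simp
  also have "\<dots> = (8/3) powr (10/3 * real k)" by (rule powr_powr)
  also have "\<dots> \<le> (8/3) powr (real k ^ 2 / 3)"
    using assms by (intro powr_mono) (auto simp: power2_eq_square)
  also have "\<dots> \<le> ((real k + 6) / 6) powr (real k ^ 2 / 3)"
    using assms by (intro powr_mono2) auto
  finally have A: "(25::real) ^ k \<le> ((real k + 6) / 6) powr (real k ^ 2 / 3)" .
  have "real ((k + 1) ^ 3) \<le> 4 ^ k" using cube_le_4pow[OF assms] by (metis of_nat_le_iff of_nat_numeral of_nat_power)
  also have "(4::real) ^ k = 2 * 2 ^ (2 * k - 1)"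
  proof -
    have "(4::real) ^ k = 2 ^ (2 * k)" by (simp add: power_mult)
    also have "2 * k = Suc (2 * k - 1)" using assms by simp
    finally show ?thesis by simp
  qed
  also have "\<dots> \<le> 109 * 2 ^ (2 * k - 1)" by simp
  finally have B: "real ((k + 1) ^ 3) \<le> 109 * 2 ^ (2 * k - 1)" .
  have "real ((k + 1) ^ 3) * 25 ^ k \<le> 109 * 2 ^ (2 * k - 1) * ((real k + 6) / 6) powr (real k ^ 2 / 3)"
    using A B by (intro mult_mono) auto
  thus ?thesis by (simp add: algebra_simps)
qed



lemma fin_T: "finite (wt_triples k)"
  by (rule finite_subset[of _ "{..k} \<times> {..k} \<times> {..k}"]) (auto simp: wt_triples_def)

lemma card_T: "card (wt_triples k) \<le> (k + 1) ^ 3"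
proof -
  have "card (wt_triples k) \<le> card ({..k} \<times> {..k} \<times> {..k})"
    by (rule card_mono) (auto simp: wt_triples_def)
  also have "\<dots> = (k + 1) ^ 3" by (simp add: card_cartesian_product power3_eq_cube)
  finally show ?thesis .
qed

lemma QM_alt: "QM k = {f. \<exists>coef. f = (\<Sum>t\<in>wt_triples k. fps_const (coef t) * emono t)}"
proof -
  have "\<And>coef. (\<lambda>(a, b, c). fps_const (coef (a, b, c)) * E2 ^ a * E4 ^ b * E6 ^ c)
     = (\<lambda>t. fps_const (coef t) * emono t)"
    by (auto simp: emono_def mult.assoc)
  then show ?thesis unfolding QM_def by simp
qed

lemma QM_add: "f \<in> QM k \<Longrightarrow> g \<in> QM k \<Longrightarrow> f + g \<in> QM k"
proof -
  assume "f \<in> QM k" "g \<in> QM k"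
  then obtain c1 c2 where "f = (\<Sum>t\<in>wt_triples k. fps_const (c1 t) * emono t)"
     "g = (\<Sum>t\<in>wt_triples k. fps_const (c2 t) * emono t)" unfolding QM_alt by auto
  hence "f + g = (\<Sum>t\<in>wt_triples k. fps_const (c1 t + c2 t) * emono t)"
    by (simp add: sum.distrib[symmetric] distrib_right[symmetric])
  thus ?thesis unfolding QM_alt by (intro CollectI exI[of _ "\<lambda>t. c1 t + c2 t"])
qed

lemma QM_smult: "f \<in> QM k \<Longrightarrow> fps_const a * f \<in> QM k"
proof -
  assume "f \<in> QM k"
  then obtain c1 where "f = (\<Sum>t\<in>wt_triples k. fps_const (c1 t) * emono t)" unfolding QM_alt by auto
  hence "fps_const a * f = (\<Sum>t\<in>wt_triples k. fps_const (a * c1 t) * emono t)"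
    by (simp add: sum_distrib_left mult.assoc[symmetric])
  thus ?thesis unfolding QM_alt by (intro CollectI exI[of _ "\<lambda>t. a * c1 t"])
qed

lemma QM_zero: "0 \<in> QM k"
  unfolding QM_alt by (rule CollectI, rule exI[of _ "\<lambda>_. 0"]) simp

lemma QM_mono: "t \<in> wt_triples k \<Longrightarrow> emono t \<in> QM k"
proof -
  assume t: "t \<in> wt_triples k"
  have "(\<Sum>s\<in>wt_triples k. fps_const (if s = t then 1 else 0) * emono s)
      = (\<Sum>s\<in>wt_triples k. if s = t then emono t else 0)" by (intro sum.cong) auto
  also have "\<dots> = emono t" using t fin_T by (subst sum.delta) auto
  finally show ?thesis unfolding QM_alt by (intro CollectI exI[of _ "\<lambda>s. if s = t then 1 else 0"]) simp
qed

lemma span_QM: assumes "\<forall>i<(d::nat). u i \<in> emono ` wt_triples k"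
  shows "(\<Sum>i<d. fps_const (x i) * u i) \<in> QM k"
  using assms
proof (induction d)
  case 0 then show ?case by (simp add: QM_zero)
next
  case (Suc d)
  have "u d \<in> QM k" using Suc.prems QM_mono by auto
  then show ?case using Suc by (auto intro!: QM_add QM_smult)
qed

lemma spanu_add: "spanu d u f \<Longrightarrow> spanu d u g \<Longrightarrow> spanu d u (f + g)"
proof -
  assume "spanu d u f" "spanu d u g"
  then obtain x y where "f = (\<Sum>i<d. fps_const (x i) * u i)" "g = (\<Sum>i<d. fps_const (y i) * u i)"
    unfolding spanu_def by auto
  hence "f + g = (\<Sum>i<d. fps_const (x i + y i) * u i)" by (simp add: sum.distrib[symmetric] distrib_right[symmetric])
  thus ?thesis unfolding spanu_def by (intro exI[of _ "\<lambda>i. x i + y i"])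
qed

lemma spanu_smult: "spanu d u f \<Longrightarrow> spanu d u (fps_const a * f)"
proof -
  assume "spanu d u f"
  then obtain x where "f = (\<Sum>i<d. fps_const (x i) * u i)" unfolding spanu_def by auto
  hence "fps_const a * f = (\<Sum>i<d. fps_const (a * x i) * u i)" by (simp add: sum_distrib_left mult.assoc[symmetric])
  thus ?thesis unfolding spanu_def by (intro exI[of _ "\<lambda>i. a * x i"])
qed

lemma spanu_zero: "spanu d u 0"
  unfolding spanu_def by (rule exI[of _ "\<lambda>_. 0"]) simp

lemma QM_span: assumes "\<forall>g\<in>emono ` wt_triples k. spanu d u g" "f \<in> QM k"
  shows "spanu d u f"
proof -
  obtain coef where f: "f = (\<Sum>t\<in>wt_triples k. fps_const (coef t) * emono t)" using assms(2) unfolding QM_alt by auto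
  have "\<And>A. A \<subseteq> wt_triples k \<Longrightarrow> spanu d u (\<Sum>t\<in>A. fps_const (coef t) * emono t)"
  proof -
    fix A assume A: "A \<subseteq> wt_triples k"
    have "finite A" using A fin_T finite_subset by auto
    then show "spanu d u (\<Sum>t\<in>A. fps_const (coef t) * emono t)" using A
    proof (induction A rule: finite_induct)
      case empty then show ?case by (simp add: spanu_zero)
    next
      case (insert x F)
      then show ?case using assms(1) by (auto intro!: spanu_add spanu_smult)
    qed
  qed
  then show ?thesis using f by auto
qed

theorem proposition3p3:
  fixes k :: nat
  assumes "k \<ge> 10"
  shows "\<exists>r b. is_Z_basis (QMZ k) b r \<and>
    (\<forall>i<r. \<forall>n::nat. n \<ge> 1 \<longrightarrow>
       norm (fps_nth (b i) n) \<le>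
         ((real k + 6) / 6) powr (real k ^ 2 / 3) * 109 * 2 ^ (2*k - 1)
           * real n ^ (2*k - 1) * (1 + ln (real n)) ^ k)"
proof -
  let ?T = "wt_triples k"
  let ?G = "emono ` ?T"
  have finG: "finite ?G" using fin_T by simp
  have intG: "\<forall>g\<in>?G. intfps g" by (auto simp: emono_def intfps_mono)
  obtain d u \<phi> D where inc: "d \<le> card ?G" "\<forall>i<d. u i \<in> ?G" "dualsys d u \<phi> D" "\<forall>g\<in>?G. spanu d u g"
    using incr[OF finG intG] by blast
  have uint: "\<And>i. i < d \<Longrightarrow> intfps (u i)" using inc(2) intG by auto
  interpret L: lat d u \<phi> D by unfold_locales (use uint inc(3) in auto)
  define b where "b i = L.comb (L.w i)" for i
  have bQMZ: "\<forall>i<d. b i \<in> QMZ k"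
  proof (intro allI impI)
    fix i assume i: "i < d"
    have "b i \<in> QM k" unfolding b_def L.comb_def by (rule span_QM[OF inc(2)])
    moreover have "intfps (b i)" using L.w_props(1)[OF i] unfolding b_def L.GG_def L.Gam_def by auto
    ultimately show "b i \<in> QMZ k" unfolding QMZ_def intfps_def by auto
  qed
  have suppw: "\<And>c. L.supp (\<lambda>i. \<Sum>l<d. c l * L.w l i)"
    unfolding L.supp_def using L.w_supp unfolding L.supp_def by auto
  have combsum: "\<And>c. L.comb (\<lambda>i. \<Sum>l<d. c l * L.w l i) = (\<Sum>l<d. fps_const (of_int (c l)) * b l)"
    unfolding b_def by (rule L.comb_sum)
  have basis: "is_Z_basis (QMZ k) b d"
    unfolding is_Z_basis_def
  proof (intro conjI ballI)
    show "\<forall>i<d. b i \<in> QMZ k" by (rule bQMZ)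
  next
    fix f assume f: "f \<in> QMZ k"
    have fQM: "f \<in> QM k" and fint: "intfps f" using f unfolding QMZ_def intfps_def by auto
    obtain x where x: "f = (\<Sum>i<d. fps_const (x i) * u i)" using QM_span[OF inc(4) fQM] unfolding spanu_def by auto
    define y where "y i = (if i < d then toint (\<phi> i f) else 0)" for i
    have yi: "\<And>i. i < d \<Longrightarrow> of_int (y i) = x i * of_int D"
    proof -
      fix i assume i: "i < d"
      have "\<phi> i f \<in> \<int>" using ifun_int[OF _ fint] inc(3) i unfolding dualsys_def by auto
      hence "of_int (y i) = \<phi> i f" unfolding y_def using i toint by simp
      also have "\<dots> = x i * of_int D" unfolding x by (rule phi_span[OF inc(3) i])
      finally show "of_int (y i) = x i * of_int D" .
    qed
    have cy: "L.comb y = f" unfolding L.comb_def x using yi L.Dpos by (intro sum.cong refl) simp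
    have yG: "y \<in> L.GG 0" unfolding L.GG_def L.Gam_def L.supp_def using cy fint by (auto simp: y_def)
    obtain c where c: "\<forall>i. (i < 0 \<or> d \<le> i) \<longrightarrow> c i = 0" "y = (\<lambda>i. \<Sum>l<d. c l * L.w l i)"
      using L.spanning[of 0] yG by auto
    have ex: "(\<forall>i\<ge>d. c i = 0) \<and> f = (\<Sum>i<d. fps_const (of_int (c i)) * b i)"
      using c cy combsum by auto
    show "\<exists>!c. (\<forall>i\<ge>d. c i = 0) \<and> f = (\<Sum>i<d. fps_const (of_int (c i)) * b i)"
    proof (rule ex1I[of _ c])
      show "(\<forall>i\<ge>d. c i = 0) \<and> f = (\<Sum>i<d. fps_const (of_int (c i)) * b i)" by (rule ex)
    next
      fix c2 assume c2: "(\<forall>i\<ge>d. c2 i = 0) \<and> f = (\<Sum>i<d. fps_const (of_int (c2 i)) * b i)"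
      have "L.comb (\<lambda>i. \<Sum>l<d. c2 l * L.w l i) = L.comb (\<lambda>i. \<Sum>l<d. c l * L.w l i)"
        using c2 ex combsum by metis
      hence eqv: "(\<lambda>i. \<Sum>l<d. c2 l * L.w l i) = (\<lambda>i. \<Sum>l<d. c l * L.w l i)"
        by (intro L.comb_inj suppw)
      have "(\<lambda>i. \<Sum>l<d. (c2 l - c l) * L.w l i) = (\<lambda>i. 0)"
      proof
        fix i show "(\<Sum>l<d. (c2 l - c l) * L.w l i) = 0"
          using fun_cong[OF eqv, of i] by (simp add: left_diff_distrib sum_subtractf)
      qed
      hence "\<And>l. c2 l - c l = 0" by (intro L.indep) (use c2 ex in auto)
      thus "c2 = c" by auto
    qed
  qed
  have bound: "\<forall>i<d. \<forall>n::nat. n \<ge> 1 \<longrightarrow>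
       norm (fps_nth (b i) n) \<le>
         ((real k + 6) / 6) powr (real k ^ 2 / 3) * 109 * 2 ^ (2*k - 1)
           * real n ^ (2*k - 1) * (1 + ln (real n)) ^ k"
  proof (intro allI impI)
    fix i n :: nat assume i: "i < d" and n: "n \<ge> 1"
    define M where "M = 25 ^ k * real n ^ (2*k - 1) * LL n ^ k"
    have Mnn: "M \<ge> 0" unfolding M_def using LL_ge1[OF n] by auto
    have ub: "\<And>l. l < d \<Longrightarrow> norm (fps_nth (u l) n) \<le> M"
    proof -
      fix l assume "l < d"
      then obtain a bb c where t: "(a, bb, c) \<in> ?T" "u l = emono (a, bb, c)" using inc(2) by force
      show "norm (fps_nth (u l) n) \<le> M" unfolding M_def t(2) emono_def
        using mono_bound[of a bb c k n] t(1) n by (simp add: wt_triples_def)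
    qed
    have "norm (fps_nth (b i) n) = norm (\<Sum>l<d. (of_int (L.w i l) / of_int D) * fps_nth (u l) n)"
      unfolding b_def L.comb_def by (simp add: fps_sum_nth)
    also have "\<dots> \<le> (\<Sum>l<d. norm ((of_int (L.w i l) / of_int D) * fps_nth (u l) n))"
      by (rule norm_sum)
    also have "\<dots> \<le> (\<Sum>l<d. M)"
    proof (intro sum_mono)
      fix l assume l: "l \<in> {..<d}"
      have r: "0 \<le> L.w i l" "L.w i l \<le> D" using L.w_range[OF i] by auto
      have "norm ((of_int (L.w i l) / of_int D :: complex)) = real_of_int (L.w i l) / real_of_int D"
        using r L.Dpos by (simp add: norm_divide)
      also have "\<dots> \<le> 1" using r L.Dpos by simp
      finally have "norm ((of_int (L.w i l) / of_int D :: complex)) \<le> 1" .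
      hence "norm ((of_int (L.w i l) / of_int D) * fps_nth (u l) n) \<le> 1 * M"
        unfolding norm_mult using ub l by (intro mult_mono) auto
      thus "norm ((of_int (L.w i l) / of_int D) * fps_nth (u l) n) \<le> M" by simp
    qed
    also have "\<dots> = real d * M" by simp
    also have "\<dots> \<le> real ((k + 1) ^ 3) * M"
    proof -
      have "d \<le> (k + 1) ^ 3" using inc(1) card_image_le[OF fin_T[of k], of emono] card_T[of k] by linarith
      hence "real d \<le> real ((k + 1) ^ 3)" by (simp only: of_nat_le_iff)
      thus ?thesis using Mnn by (intro mult_right_mono)
    qed
    also have "\<dots> = (real ((k + 1) ^ 3) * 25 ^ k) * (real n ^ (2*k - 1) * LL n ^ k)"
      unfolding M_def by (simp add: algebra_simps)
    also have "\<dots> \<le> (((real k + 6) / 6) powr (real k ^ 2 / 3) * 109 * 2 ^ (2*k - 1)) * (real n ^ (2*k - 1) * LL n ^ k)"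
      using key_ineq[OF assms] LL_ge1[OF n] by (intro mult_right_mono) auto
    finally show "norm (fps_nth (b i) n) \<le>
         ((real k + 6) / 6) powr (real k ^ 2 / 3) * 109 * 2 ^ (2*k - 1)
           * real n ^ (2*k - 1) * (1 + ln (real n)) ^ k" by (simp add: LL_def mult.assoc)
  qed
  show ?thesis using basis bound by blast
qed


end
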